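(* Let $g\geqslant0$ be even and $i\geqslant0$ an integer. Then: (i) there exists $w_{g,i}\in\mathbb{C}[\alpha,\gamma]$, a unit modulo $J_g^+$, such that $w_{g,i}\gamma^i\zeta^+_{g-2i-1}\equiv\gamma^{i+1}\zeta^+_{g-2i-2}\pmod{J_g^+}$; (ii) there exists $x_{g,i}\in\mathbb{C}[\alpha,\gamma]$, a unit modulo $J_g^+$, such that $\alpha\, x_{g,i}\gamma^i\zeta^+_{g-2i-1}\equiv\gamma^{i+1}\zeta^+_{g-2i-3}\pmod{J_g^+}$ if $i$ is even, and $x_{g,i}\gamma^i\zeta^+_{g-2i-1}\equiv\alpha\,\gamma^{i+1}\zeta^+_{g-2i-3}\pmod{J_g^+}$ if $i$ is odd.
   Context: $\zeta_k^+\in\mathbb{C}[\alpha,\gamma]$: $\zeta^+_i=0$ for $i<0$, $\zeta^+_0=1$, $\zeta^+_{k+1}=\alpha\zeta^+_k+16k^2\zeta^+_{k-1}+2k(k-1)\gamma\zeta^+_{k-2}$ for $k$ even and $\zeta^+_{k+1}=\alpha\zeta^+_k+2k(k-1)\gamma\zeta^+_{k-2}$ for $k$ odd ($k\geqslant0$); $J^+_k=(\zeta^+_k,\zeta^+_{k+1},\zeta^+_{k+2})$. A unit modulo $J$ is an element whose image in $\mathbb{C}[\alpha,\gamma]/J$ is invertible. *)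

theory Defs
  imports "HOL-Computational_Algebra.Polynomial"
begin

text \<open>The ring C[alpha,gamma] is modelled as (complex poly) poly:
  polynomials in gamma whose coefficients are polynomials in alpha.\<close>

type_synonym cpoly2 = "complex poly poly"

definition alpha :: cpoly2 where "alpha = [:[:0, 1:]:]"
definition gamma :: cpoly2 where "gamma = [:0, 1:]"

fun zeta_nat :: "nat \<Rightarrow> cpoly2" where
  "zeta_nat 0 = 1"
| "zeta_nat (Suc k) =
     alpha * zeta_nat k
     + (if even k then of_nat (16 * k^2) * (if k \<ge> 1 then zeta_nat (k - 1) else 0) else 0)
     + of_nat (2 * k * (k - 1)) * gamma * (if k \<ge> 2 then zeta_nat (k - 2) else 0)"

definition zeta :: "int \<Rightarrow> cpoly2" where
  "zeta i = (if i < 0 then 0 else zeta_nat (nat i))"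

definition in_J :: "nat \<Rightarrow> cpoly2 \<Rightarrow> bool" where
  "in_J k x \<longleftrightarrow> (\<exists>p q r. x = p * zeta (int k) + q * zeta (int k + 1) + r * zeta (int k + 2))"

definition cong_J :: "nat \<Rightarrow> cpoly2 \<Rightarrow> cpoly2 \<Rightarrow> bool" where
  "cong_J k x y \<longleftrightarrow> in_J k (x - y)"

definition unit_mod_J :: "nat \<Rightarrow> cpoly2 \<Rightarrow> bool" where
  "unit_mod_J k u \<longleftrightarrow> (\<exists>v. cong_J k (u * v) 1)"

end

theory Submission
  imports Defs "HOL-Computational_Algebra.Computational_Algebra" "HOL-Computational_Algebra.Field_as_Ring"
begin

lemma in_J_0: "in_J k 0" unfolding in_J_def by (rule exI[of _ 0], rule exI[of _ 0], rule exI[of _ 0], simp)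
lemma in_J_add: assumes "in_J k x" "in_J k y" shows "in_J k (x + y)"
proof -
  obtain p q r where x: "x = p * zeta (int k) + q * zeta (int k + 1) + r * zeta (int k + 2)"
    using assms(1) unfolding in_J_def by blast
  obtain p' q' r' where y: "y = p' * zeta (int k) + q' * zeta (int k + 1) + r' * zeta (int k + 2)"
    using assms(2) unfolding in_J_def by blast
  show ?thesis unfolding in_J_def x y
    by (rule exI[of _ "p+p'"], rule exI[of _ "q+q'"], rule exI[of _ "r+r'"]) (simp add: algebra_simps)
qed
lemma in_J_mult: assumes "in_J k x" shows "in_J k (y * x)"
proof -
  obtain p q r where x: "x = p * zeta (int k) + q * zeta (int k + 1) + r * zeta (int k + 2)"
    using assms(1) unfolding in_J_def by blast
  show ?thesis unfolding in_J_def x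
    by (rule exI[of _ "y*p"], rule exI[of _ "y*q"], rule exI[of _ "y*r"]) (simp add: algebra_simps)
qed
lemma in_J_mult2: "in_J k x \<Longrightarrow> in_J k (x * y)"
  using in_J_mult[of k x y] by (simp add: mult.commute)
lemma in_J_uminus: "in_J k x \<Longrightarrow> in_J k (- x)"
  using in_J_mult[of k x "-1"] by simp
lemma in_J_diff: "in_J k x \<Longrightarrow> in_J k y \<Longrightarrow> in_J k (x - y)"
  using in_J_add[of k x "-y"] in_J_uminus[of k y] by simp
lemma in_J_z0: "in_J k (zeta (int k))" unfolding in_J_def
  by (rule exI[of _ 1], rule exI[of _ 0], rule exI[of _ 0]) simp
lemma in_J_z1: "in_J k (zeta (int k + 1))" unfolding in_J_def
  by (rule exI[of _ 0], rule exI[of _ 1], rule exI[of _ 0]) simp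
lemma in_J_z2: "in_J k (zeta (int k + 2))" unfolding in_J_def
  by (rule exI[of _ 0], rule exI[of _ 0], rule exI[of _ 1]) simp

definition cst :: "complex \<Rightarrow> cpoly2" where "cst c = [:[:c:]:]"

lemma of_int_cpoly2: "(of_int n :: cpoly2) = cst (of_int n)"
  unfolding cst_def by (simp add: of_int_poly)

lemma in_J_div: "in_J k (of_int n * x) \<Longrightarrow> n \<noteq> 0 \<Longrightarrow> in_J k x"
proof -
  assume h: "in_J k (of_int n * x)" "n \<noteq> 0"
  have c: "cst (1 / of_int n) * of_int n = 1"
    unfolding of_int_cpoly2 cst_def using h(2) by (simp add: one_pCons)
  have "cst (1 / of_int n) * (of_int n * x) = x"
    by (simp add: mult.assoc[symmetric] c)
  with in_J_mult[OF h(1), of "cst (1 / of_int n)"] show ?thesis by simp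
qed

lemma zeta_neg: "i < 0 \<Longrightarrow> zeta i = 0" unfolding zeta_def by simp

lemma zeta_rec: fixes K :: int assumes "K \<ge> 0"
  shows "zeta (K + 1) = alpha * zeta K + (if even K then of_int (16 * K^2) * zeta (K - 1) else 0)
     + of_int (2 * K * (K - 1)) * gamma * zeta (K - 2)"
proof -
  obtain k where k: "K = int k" using assms nonneg_eq_int by blast
  have e1: "zeta (int k - 1) = (if k \<ge> 1 then zeta_nat (k - 1) else 0)"
    unfolding zeta_def by (auto simp: nat_diff_distrib)
  have e2: "zeta (int k - 2) = (if k \<ge> 2 then zeta_nat (k - 2) else 0)"
    unfolding zeta_def by (auto simp: nat_diff_distrib)
  have e0: "zeta (int k + 1) = zeta_nat (Suc k)" unfolding zeta_def by (simp add: nat_add_distrib)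
  have e3: "zeta (int k) = zeta_nat k" unfolding zeta_def by simp
  have c1: "(of_nat (16 * k^2) :: cpoly2) = of_int (16 * (int k)^2)" by simp
  have c2: "(of_nat (2 * k * (k - 1)) :: cpoly2) = of_int (2 * int k * (int k - 1))"
    by (cases k) (auto simp: of_nat_diff algebra_simps)
  show ?thesis unfolding k e0 e1 e2 e3 using c1 c2 by (auto simp: even_of_nat[symmetric])
qed


lemma zeta_rec_odd: fixes K :: int assumes "K \<ge> 0" "odd K"
  shows "zeta (K + 1) = alpha * zeta K + of_int (2 * K * (K - 1)) * gamma * zeta (K - 2)"
  using zeta_rec[OF assms(1)] assms(2) by simp
lemma zeta_rec_even: fixes K :: int assumes "K \<ge> 0" "even K"
  shows "zeta (K + 1) = alpha * zeta K + of_int (16 * K^2) * zeta (K - 1)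
     + of_int (2 * K * (K - 1)) * gamma * zeta (K - 2)"
  using zeta_rec[OF assms(1)] assms(2) by simp

lemma aux2: fixes z1 z0 z2 a c gm :: "'a::comm_ring_1"
  shows "z1 = a * z0 + c * gm * z2 \<Longrightarrow> gm^(i+1) * z1 = a * (gm^(i+1) * z0) + c * (gm^(i+2) * z2)"
  by (simp add: algebra_simps)
lemma aux1: fixes z1 z0 zm z2 a c d gm :: "'a::comm_ring_1"
  shows "z1 = a * z0 + d * zm + c * gm * z2 \<Longrightarrow> gm * (gm^i * z1) = a * (gm^(i+1) * z0) + d * (gm^(i+1) * zm) + c * (gm^(i+1+1) * z2)"
  by (simp add: algebra_simps)

definition AA :: "nat \<Rightarrow> nat \<Rightarrow> cpoly2" where
  "AA g i = gamma ^ i * zeta (int g - 2 * int i - 1)"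
definition BB :: "nat \<Rightarrow> nat \<Rightarrow> cpoly2" where
  "BB g i = gamma ^ (i + 1) * zeta (int g - 2 * int i - 2)"

lemma E2: assumes "2 * i + 3 \<le> g" "even g"
  shows "BB g i = alpha * AA g (i + 1) + of_int (2 * (int g - 2 * int i - 3) * (int g - 2 * int i - 4)) * AA g (i + 2)"
proof -
  let ?K = "int g - 2 * int i - 3"
  have K0: "?K \<ge> 0" using assms by linarith
  have Ko: "odd ?K" using assms(2) by simp
  have r: "zeta (?K + 1) = alpha * zeta ?K + of_int (2 * ?K * (?K - 1)) * gamma * zeta (?K - 2)"
    by (rule zeta_rec_odd[OF K0 Ko])
  have a: "?K + 1 = int g - 2 * int i - 2" "?K = int g - 2 * int (i + 1) - 1"
     "?K - 2 = int g - 2 * int (i + 2) - 1" "?K - 1 = int g - 2 * int i - 4" by simp_all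
  have r': "zeta (int g - 2 * int i - 2) = alpha * zeta (int g - 2 * int (i + 1) - 1) + of_int (2 * (int g - 2 * int i - 3) * (int g - 2 * int i - 4)) * gamma * zeta (int g - 2 * int (i + 2) - 1)"
    using r by simp
  show ?thesis unfolding AA_def BB_def by (rule aux2[OF r'])
qed

lemma E1: assumes "2 * i + 2 \<le> g" "even g"
  shows "gamma * AA g i = alpha * BB g i + of_int (16 * (int g - 2 * int i - 2)^2) * AA g (i + 1)
     + of_int (2 * (int g - 2 * int i - 2) * (int g - 2 * int i - 3)) * BB g (i + 1)"
proof -
  let ?K = "int g - 2 * int i - 2"
  have K0: "?K \<ge> 0" using assms by linarith
  have Ke: "even ?K" using assms(2) by simp
  have r: "zeta (?K + 1) = alpha * zeta ?K + of_int (16 * ?K^2) * zeta (?K - 1)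
     + of_int (2 * ?K * (?K - 1)) * gamma * zeta (?K - 2)"
    by (rule zeta_rec_even[OF K0 Ke])
  have a: "?K + 1 = int g - 2 * int i - 1" "?K - 1 = int g - 2 * int (i + 1) - 1"
     "?K - 2 = int g - 2 * int (i + 1) - 2" "?K - 1 = int g - 2 * int i - 3" by simp_all
  have r': "zeta (int g - 2 * int i - 1) = alpha * zeta (int g - 2 * int i - 2) + of_int (16 * (int g - 2 * int i - 2)^2) * zeta (int g - 2 * int (i + 1) - 1)
     + of_int (2 * (int g - 2 * int i - 2) * (int g - 2 * int i - 3)) * gamma * zeta (int g - 2 * int (i + 1) - 2)"
    using r by simp
  show ?thesis unfolding AA_def BB_def by (rule aux1[OF r'])
qed

lemma in_J_const_gen: "in_J k (x * zeta (int k))" "in_J k (x * zeta (int k + 1))" "in_J k (x * zeta (int k + 2))"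
  by (intro in_J_mult in_J_z0 in_J_z1 in_J_z2)+

lemma gz1: assumes "g \<ge> 1" "even g" shows "in_J g (gamma * zeta (int g - 1))"
proof -
  have "odd (int g + 1)" using assms by simp
  from zeta_rec_odd[OF _ this] have "of_int (2 * (int g + 1) * int g) * (gamma * zeta (int g - 1)) = zeta (int g + 2) - alpha * zeta (int g + 1)"
    by (simp add: algebra_simps)
  moreover have "in_J g (zeta (int g + 2) - alpha * zeta (int g + 1))"
    by (intro in_J_diff in_J_mult in_J_z1 in_J_z2)
  moreover have nz: "2 * (int g + 1) * int g \<noteq> 0" using assms by simp
  ultimately show ?thesis using in_J_div[of g _ _, OF _ nz] by simp
qed

lemma W1: assumes "g \<ge> 2" "even g"
  shows "in_J g (of_int (16 * (int g)^2) * zeta (int g - 1) + of_int (2 * int g * (int g - 1)) * gamma * zeta (int g - 2))"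
proof -
  have "zeta (int g + 1) = alpha * zeta (int g) + of_int (16 * (int g)^2) * zeta (int g - 1)
     + of_int (2 * int g * (int g - 1)) * gamma * zeta (int g - 2)"
    using zeta_rec_even[of "int g"] assms by simp
  then have "of_int (16 * (int g)^2) * zeta (int g - 1) + of_int (2 * int g * (int g - 1)) * gamma * zeta (int g - 2)
     = zeta (int g + 1) - alpha * zeta (int g)" by (simp add: algebra_simps)
  moreover have "in_J g (zeta (int g + 1) - alpha * zeta (int g))"
    by (intro in_J_diff in_J_mult in_J_z1 in_J_z0)
  ultimately show ?thesis by simp
qed

lemma gz2: assumes "g \<ge> 2" "even g" shows "in_J g (gamma^2 * zeta (int g - 2))"
proof -
  have a: "in_J g (gamma * (of_int (16 * (int g)^2) * zeta (int g - 1) + of_int (2 * int g * (int g - 1)) * gamma * zeta (int g - 2)))"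
    by (rule in_J_mult[OF W1[OF assms]])
  have b: "in_J g (of_int (16 * (int g)^2) * (gamma * zeta (int g - 1)))"
    by (rule in_J_mult[OF gz1]) (use assms in auto)
  have "of_int (2 * int g * (int g - 1)) * (gamma^2 * zeta (int g - 2)) =
     gamma * (of_int (16 * (int g)^2) * zeta (int g - 1) + of_int (2 * int g * (int g - 1)) * gamma * zeta (int g - 2))
     - of_int (16 * (int g)^2) * (gamma * zeta (int g - 1))" by (simp add: algebra_simps power2_eq_square)
  then have "in_J g (of_int (2 * int g * (int g - 1)) * (gamma^2 * zeta (int g - 2)))"
    using in_J_diff[OF a b] by simp
  moreover have nz: "2 * int g * (int g - 1) \<noteq> 0" using assms by simp
  ultimately show ?thesis using in_J_div[of g _ _, OF _ nz] by simp
qed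

lemma in_J_gpow: "in_J g (gamma^m * x) \<Longrightarrow> m \<le> m' \<Longrightarrow> in_J g (gamma^m' * x)"
proof -
  assume h: "in_J g (gamma^m * x)" "m \<le> m'"
  have "gamma^m' * x = gamma^(m'-m) * (gamma^m * x)" using h(2)
    by (simp add: mult.assoc[symmetric] power_add[symmetric])
  then show ?thesis by (simp only:) (rule in_J_mult[OF h(1)])
qed

lemma aux3: fixes z1 z0 zm z2 a c d gm :: "'a::comm_ring_1"
  shows "m \<ge> 1 \<Longrightarrow> c * (gm^m * z2) = gm^(m-1) * (a * z0 + d * zm + c * gm * z2) - a * (gm^(m-1) * z0) - d * (gm^(m-1) * zm)"
  by (cases m) (simp_all add: algebra_simps)
lemma aux4: fixes z1 z0 zm z2 a c d gm :: "'a::comm_ring_1"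
  shows "m \<ge> 1 \<Longrightarrow> c * (gm^m * z2) = gm^(m-1) * (a * z0 + c * gm * z2) - a * (gm^(m-1) * z0)"
  by (cases m) (simp_all add: algebra_simps)

lemma H: assumes "g \<ge> 2" "even g"
  shows "j + 1 \<le> 2 * m \<Longrightarrow> in_J g (gamma^m * zeta (int g - int j))"
proof (induction j arbitrary: m rule: less_induct)
  case (less j)
  show ?case
  proof (cases "j \<le> 2")
    case True
    then consider "j = 0" | "j = 1" | "j = 2" by linarith
    then show ?thesis
    proof cases
      case 1 then show ?thesis using in_J_const_gen(1)[of g "gamma^m"] by simp
    next
      case 2 then have "m \<ge> 1" using less.prems by simp
      then show ?thesis using in_J_gpow[of g 1 "zeta (int g - 1)" m] gz1[of g] assms 2 by simp
    next
      case 3 then have "m \<ge> 2" using less.prems by simp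
      then show ?thesis using in_J_gpow[of g 2 "zeta (int g - 2)" m] gz2[of g] assms 3 by simp
    qed
  next
    case False
    define j' where "j' = j - 3"
    have j': "j = j' + 3" using False unfolding j'_def by simp
    have m1: "m \<ge> 1" "j' + 1 \<le> 2 * (m - 1)" "j' + 2 \<le> 2 * (m - 1)" using less.prems j' by auto
    let ?K = "int g - int j' - 1"
    show ?thesis
    proof (cases "?K \<ge> 2")
      case False
      then have "int g - int j < 0" using j' by simp
      then show ?thesis using zeta_neg in_J_0 by simp
    next
      case True
      have IH0: "in_J g (gamma^(m-1) * zeta (int g - int j'))" using less.IH[of j' "m-1"] m1 j' by simp
      have IH1: "in_J g (gamma^(m-1) * zeta (int g - int (j'+1)))" using less.IH[of "j'+1" "m-1"] m1 j' by simp
      have z0: "zeta (?K + 1) = zeta (int g - int j')" by simp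
      have z1: "zeta ?K = zeta (int g - int (j'+1))" by (rule arg_cong[where f=zeta]) simp
      have z2: "zeta (?K - 1) = zeta (int g - int (j'+2))" by (rule arg_cong[where f=zeta]) simp
      have z3: "zeta (?K - 2) = zeta (int g - int j)" using j' by (intro arg_cong[where f=zeta]) simp
      have IH0': "in_J g (gamma^(m-1) * zeta (?K + 1))" by (subst z0) (rule IH0)
      have IH1': "in_J g (gamma^(m-1) * zeta ?K)" by (subst z1) (rule IH1)
      have rest: "in_J g (of_int (2 * ?K * (?K - 1)) * (gamma^m * zeta (?K - 2)))"
      proof (cases "even ?K")
        case True
        then have Jo: "odd j'" using assms(2) by simp
        then have m2: "j' + 2 + 1 \<le> 2 * (m - 1)" using m1 by presburger
        have IH2: "in_J g (gamma^(m-1) * zeta (int g - int (j'+2)))" using less.IH[of "j'+2" "m-1"] m2 j' by simp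
        have IH2': "in_J g (gamma^(m-1) * zeta (?K - 1))" by (subst z2) (rule IH2)
        have r: "zeta (?K + 1) = alpha * zeta ?K + of_int (16 * ?K^2) * zeta (?K - 1)
           + of_int (2 * ?K * (?K - 1)) * gamma * zeta (?K - 2)" using zeta_rec_even[OF _ True] \<open>?K \<ge> 2\<close> by simp
        have X: "of_int (2 * ?K * (?K - 1)) * (gamma^m * zeta (?K - 2)) =
          gamma^(m-1) * zeta (?K + 1) - alpha * (gamma^(m-1) * zeta ?K) - of_int (16 * ?K^2) * (gamma^(m-1) * zeta (?K - 1))"
          unfolding r using m1(1) by (rule aux3)
        show ?thesis unfolding X by (rule in_J_diff[OF in_J_diff[OF IH0' in_J_mult[OF IH1']] in_J_mult[OF IH2']])
      next
        case False
        have r: "zeta (?K + 1) = alpha * zeta ?K + of_int (2 * ?K * (?K - 1)) * gamma * zeta (?K - 2)"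
          using zeta_rec_odd[OF _ False] \<open>?K \<ge> 2\<close> by simp
        have X: "of_int (2 * ?K * (?K - 1)) * (gamma^m * zeta (?K - 2)) =
          gamma^(m-1) * zeta (?K + 1) - alpha * (gamma^(m-1) * zeta ?K)"
          unfolding r using m1(1) by (rule aux4)
        show ?thesis unfolding X by (rule in_J_diff[OF IH0' in_J_mult[OF IH1']])
      qed
      then have rest': "in_J g (of_int (2 * ?K * (?K - 1)) * (gamma^m * zeta (int g - int j)))"
        by (subst z3[symmetric])
      moreover have nz: "2 * ?K * (?K - 1) \<noteq> 0" using True by simp
      ultimately show ?thesis using in_J_div[of g _ _, OF _ nz] by simp
    qed
  qed
qed

lemma coprime_bezout_complex:
  fixes p q :: "complex poly"
  assumes "q \<noteq> 0" "\<And>z. poly q z = 0 \<Longrightarrow> poly p z \<noteq> 0"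
  shows "\<exists>a b. a * p + b * q = 1"
proof -
  define d where "d = gcd p q"
  have dn: "d \<noteq> 0" using assms(1) unfolding d_def by simp
  have bz: "fst (bezout_coefficients p q) * p + snd (bezout_coefficients p q) * q = d"
    unfolding d_def by (rule bezout_coefficients_fst_snd)
  show ?thesis
  proof (cases "degree d = 0")
    case True
    then have "is_unit d" using dn by (simp add: is_unit_iff_degree)
    then obtain e where e: "1 = d * e" by (auto elim: dvdE)
    show ?thesis
      by (rule exI[of _ "e * fst (bezout_coefficients p q)"], rule exI[of _ "e * snd (bezout_coefficients p q)"])
         (simp add: e bz[symmetric] algebra_simps)
  next
    case False
    then have "\<not> constant (poly d)" by (simp add: constant_degree)
    then obtain z where z: "poly d z = 0" using fundamental_theorem_of_algebra by blast
    have "d dvd p" "d dvd q" unfolding d_def by simp_all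
    then obtain k1 k2 where "p = d * k1" "q = d * k2" by (auto elim!: dvdE)
    then have "poly p z = 0" "poly q z = 0" using z by simp_all
    with assms(2) show ?thesis by blast
  qed
qed

definition Pk :: "nat \<Rightarrow> complex poly" where "Pk k = coeff (zeta_nat k) 0"

lemma coeff0_alpha: "coeff alpha 0 = [:0, 1:]" unfolding alpha_def by simp
lemma coeff0_gamma: "coeff gamma 0 = 0" unfolding gamma_def by simp
lemma coeff0_of_nat: "coeff (of_nat n :: cpoly2) 0 = of_nat n" by (simp add: of_nat_poly)

lemma Pk_Suc: "Pk (Suc k) = [:0, 1:] * Pk k + (if even k then of_nat (16 * k^2) * (if k \<ge> 1 then Pk (k - 1) else 0) else 0)"
  unfolding Pk_def by (simp add: coeff_mult_0 coeff0_alpha coeff0_gamma coeff0_of_nat del: of_nat_mult)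

lemma Pk_odd: "Pk (2 * m + 3) = ([:0, 1:]^2 + of_nat (64 * (m+1)^2)) * Pk (2 * m + 1)"
proof -
  have a: "Pk (2 * m + 3) = [:0, 1:] * Pk (2 * m + 2) + of_nat (16 * (2*m+2)^2) * Pk (2 * m + 1)"
    using Pk_Suc[of "2*m+2"] by (simp add: numeral_3_eq_3 add.commute del: of_nat_mult)
  have b: "Pk (2 * m + 2) = [:0, 1:] * Pk (2 * m + 1)"
    using Pk_Suc[of "2*m+1"] by (simp add: add.commute)
  have c: "(of_nat (16 * (2*m+2)^2) :: complex poly) = of_nat (64 * (m+1)^2)"
    by (simp add: power2_eq_square algebra_simps)
  show ?thesis unfolding a b c by (simp add: algebra_simps power2_eq_square)
qed

lemma Pk_1: "Pk 1 = [:0, 1:]" using Pk_Suc[of 0] by (simp add: Pk_def)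

lemma Pk_roots: "poly (Pk (2 * m + 1)) z = 0 \<Longrightarrow> \<exists>s\<ge>0. z^2 = - complex_of_real s"
proof (induction m)
  case 0
  then have "z = 0" using Pk_1 by simp
  then show ?case by (intro exI[of _ 0]) simp
next
  case (Suc m)
  have "Pk (2 * Suc m + 1) = ([:0, 1:]^2 + of_nat (64 * (m+1)^2)) * Pk (2 * m + 1)"
    using Pk_odd[of m] by (simp add: numeral_3_eq_3)
  with Suc.prems have "z^2 + of_nat (64 * (m+1)^2) = 0 \<or> poly (Pk (2 * m + 1)) z = 0"
    by (simp add: of_nat_poly)
  then show ?case
  proof
    assume "z^2 + of_nat (64 * (m+1)^2) = 0"
    then have "z^2 = - complex_of_real (real (64 * (m+1)^2))" by (simp add: eq_neg_iff_add_eq_0)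
    then show ?thesis by (intro exI[of _ "real (64 * (m+1)^2)"]) simp
  next
    assume "poly (Pk (2 * m + 1)) z = 0"
    then show ?thesis by (rule Suc.IH)
  qed
qed

lemma Pk_nz: "Pk (2 * m + 1) \<noteq> 0"
proof
  assume "Pk (2 * m + 1) = 0"
  then have "poly (Pk (2 * m + 1)) 1 = 0" by simp
  then obtain s where "s \<ge> 0" "(1::complex)^2 = - complex_of_real s" using Pk_roots by blast
  then have "(1::real) = - s" by (metis of_real_1 of_real_minus of_real_eq_iff power_one)
  with \<open>s \<ge> 0\<close> show False by simp
qed


lemma in_J_pow_diff: "in_J g (x - y) \<Longrightarrow> in_J g (x^n - y^n)"
proof (induction n)
  case 0 then show ?case by (simp add: in_J_0)
next
  case (Suc n)
  have "x^Suc n - y^Suc n = x * (x^n - y^n) + y^n * (x - y)" by (simp add: algebra_simps)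
  then show ?case using Suc by (simp add: in_J_add in_J_mult)
qed

lemma pCons_as: "pCons x y = [:x:] + gamma * y" unfolding gamma_def
  by (simp add: poly_eq_iff coeff_pCons split: nat.split)

lemma Z2_in_J: assumes "g \<ge> 2" "even g" shows "in_J g (zeta (int g - 1) * zeta (int g - 1))"
proof -
  let ?Z = "zeta (int g - 1)"
  have a: "in_J g (?Z * (of_int (16 * (int g)^2) * ?Z + of_int (2 * int g * (int g - 1)) * gamma * zeta (int g - 2)))"
    by (rule in_J_mult[OF W1[OF assms]])
  have b: "in_J g ((of_int (2 * int g * (int g - 1)) * zeta (int g - 2)) * (gamma * ?Z))"
    by (rule in_J_mult[OF gz1]) (use assms in auto)
  have "of_int (16 * (int g)^2) * (?Z * ?Z) = ?Z * (of_int (16 * (int g)^2) * ?Z + of_int (2 * int g * (int g - 1)) * gamma * zeta (int g - 2))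
     - (of_int (2 * int g * (int g - 1)) * zeta (int g - 2)) * (gamma * ?Z)" by (simp add: algebra_simps)
  then have "in_J g (of_int (16 * (int g)^2) * (?Z * ?Z))" using in_J_diff[OF a b] by simp
  moreover have nz: "16 * (int g)^2 \<noteq> 0" using assms by simp
  ultimately show ?thesis using in_J_div[of g _ _, OF _ nz] by simp
qed

lemma gT_in_J: assumes "g \<ge> 2" "even g" shows "in_J g (gamma ^ (g div 2 + 1))"
  using H[OF assms, of g "g div 2 + 1"] assms by (simp add: zeta_def)

lemma aux_sq: fixes B Z G R :: "'a::comm_ring_1"
  shows "(B * Z + G * R)^2 - (G * R)^2 = (B * B) * (Z * Z) + (2 * B * R) * (G * Z)"
  by (simp add: algebra_simps power2_eq_square)

lemma aux_pw: fixes G R :: "'a::comm_ring_1"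
  shows "((G * R)^2)^(n+1) = (G^(n+1) * R^(2*n+2)) * G^(n+1)"
proof -
  have "((G * R)^2)^(n+1) = (G * R)^(2*(n+1))" by (rule power_mult[symmetric])
  also have "\<dots> = G^(2*(n+1)) * R^(2*(n+1))" by (rule power_mult_distrib)
  also have "G^(2*(n+1)) = G^(n+1) * G^(n+1)" by (simp only: mult_2 power_add)
  finally show ?thesis by (simp add: ac_simps)
qed

lemma unit_lemma:
  assumes g: "g \<ge> 2" "even g"
    and good: "\<And>z s. s \<ge> 0 \<Longrightarrow> z^2 = - complex_of_real s \<Longrightarrow> poly (coeff u 0) z \<noteq> 0"
  shows "unit_mod_J g u"
proof -
  define T where "T = g div 2"
  have gT: "g - 1 = 2 * (T - 1) + 1" "g = 2 * T" "T \<ge> 1" using g unfolding T_def by auto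
  let ?P = "Pk (g - 1)"
  let ?Z = "zeta (int g - 1)"
  have ZP: "?Z = zeta_nat (g - 1)" using g unfolding zeta_def by (simp add: nat_diff_distrib)
  have Pnz: "?P \<noteq> 0" unfolding gT(1) by (rule Pk_nz)
  have "\<And>z. poly ?P z = 0 \<Longrightarrow> poly (coeff u 0) z \<noteq> 0"
    using Pk_roots[of "T - 1"] good unfolding gT(1) by blast
  from coprime_bezout_complex[OF Pnz this] obtain a b where ab: "a * coeff u 0 + b * ?P = 1" by blast
  obtain p u1 where u: "u = pCons p u1" by (cases u)
  obtain P z1 where Z: "?Z = pCons P z1" by (cases ?Z)
  have Pe: "P = ?P" using Z unfolding ZP Pk_def by (metis coeff_pCons_0)
  have pe: "p = coeff u 0" using u by simp
  define r where "r = - smult a u1 - smult b z1"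
  define t where "t = 1 - [:a:] * u"
  have tdec: "t = [:b:] * ?Z + gamma * r"
  proof -
    have "t = pCons (1 - a * p) (- smult a u1)" unfolding t_def u by (simp add: one_pCons)
    also have "1 - a * p = b * P" using ab unfolding pe[symmetric] Pe[symmetric] by (simp add: algebra_simps)
    finally have "t = pCons (b * P) (- smult a u1)" .
    moreover have "[:b:] * ?Z + gamma * r = pCons (b * P) (- smult a u1)"
      unfolding Z r_def gamma_def by simp
    ultimately show ?thesis by simp
  qed
  have ZZ: "in_J g (?Z * ?Z)" by (rule Z2_in_J[OF g])
  have gZ: "in_J g (gamma * ?Z)" by (rule gz1) (use g in auto)
  have t2: "in_J g (t^2 - (gamma * r)^2)"
  proof -
    have e: "t^2 - (gamma * r)^2 = ([:b:] * [:b:]) * (?Z * ?Z) + (2 * [:b:] * r) * (gamma * ?Z)"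
      unfolding tdec by (rule aux_sq)
    show ?thesis unfolding e by (rule in_J_add[OF in_J_mult[OF ZZ] in_J_mult[OF gZ]])
  qed
  have t3: "in_J g ((t^2)^(T+1) - ((gamma * r)^2)^(T+1))" by (rule in_J_pow_diff[OF t2])
  have t4: "in_J g (((gamma * r)^2)^(T+1))"
  proof -
    have "((gamma * r)^2)^(T+1) = (gamma^(T+1) * r^(2*T+2)) * gamma^(T+1)"
      by (rule aux_pw)
    then show ?thesis using in_J_mult[OF gT_in_J[OF g], of "gamma^(T+1) * r^(2*T+2)"] unfolding T_def by simp
  qed
  have tM: "in_J g (t^(2*T+2))"
  proof -
    have ee: "2*T+2 = 2*(T+1)" by simp
    have "t^(2*T+2) = ((t^2)^(T+1) - ((gamma * r)^2)^(T+1)) + ((gamma * r)^2)^(T+1)"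
      by (simp only: ee power_mult diff_add_cancel)
    then show ?thesis using in_J_add[OF t3 t4] by simp
  qed
  define v where "v = [:a:] * (\<Sum>i<2*T+2. t^i)"
  have "u * v = (1 - t) * (\<Sum>i<2*T+2. t^i)" unfolding v_def t_def by (simp add: algebra_simps)
  also have "\<dots> = 1 - t^(2*T+2)" by (rule one_diff_power_eq[symmetric])
  finally have "u * v - 1 = - (t^(2*T+2))" by simp
  then have "cong_J g (u * v) 1" unfolding cong_J_def using in_J_uminus[OF tM] by simp
  then show ?thesis unfolding unit_mod_J_def by blast
qed

definition cc :: "nat \<Rightarrow> nat \<Rightarrow> int" where "cc g i = 2 * (int g - 2 * int i - 3) * (int g - 2 * int i - 4)"
definition ee :: "nat \<Rightarrow> nat \<Rightarrow> int" where "ee g i = 2 * (int g - 2 * int i - 2) * (int g - 2 * int i - 3)"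
definition dd :: "nat \<Rightarrow> nat \<Rightarrow> int" where "dd g i = 16 * (int g - 2 * int i - 2)^2"

fun PS :: "'a::comm_ring_1 \<Rightarrow> nat \<Rightarrow> nat \<Rightarrow> 'a \<times> 'a \<times> 'a \<times> 'a" where
  "PS a2 g 0 = (- of_int (8 * int g), of_int (int g - 1), -1, of_int (2 * (int g - 1) * (int g - 2)))"
| "PS a2 g (Suc i) = (case PS a2 g i of (n, d, n', d') \<Rightarrow>
    if even i then (-(n*d' + of_int (dd g i)*d*n'), of_int (ee g i)*d*n', (d'*n - a2*d*n')*d', of_int (cc g i)*d*d'*n')
    else (-(d'*(a2*d'*n + of_int (dd g i)*d*n')), of_int (ee g i)*d*d'*n', (d'*n - d*n')*d', of_int (cc g i)*d*d'*n'))"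

definition map4 :: "('a \<Rightarrow> 'b) \<Rightarrow> 'a \<times> 'a \<times> 'a \<times> 'a \<Rightarrow> 'b \<times> 'b \<times> 'b \<times> 'b" where
  "map4 f x = (case x of (a, b, c, d) \<Rightarrow> (f a, f b, f c, f d))"

definition ev :: "complex \<Rightarrow> cpoly2 \<Rightarrow> complex" where "ev z u = poly (coeff u 0) z"

lemma ev_mult: "ev z (x * y) = ev z x * ev z y" unfolding ev_def by (simp add: coeff_mult_0)
lemma ev_add: "ev z (x + y) = ev z x + ev z y" unfolding ev_def by simp
lemma ev_minus: "ev z (- x) = - ev z x" unfolding ev_def by simp
lemma ev_diff: "ev z (x - y) = ev z x - ev z y" unfolding ev_def by simp
lemma ev_of_int: "ev z (of_int k) = of_int k" unfolding ev_def by (simp add: of_int_poly)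
lemma ev_one: "ev z 1 = 1" unfolding ev_def by simp
lemma ev_alpha: "ev z alpha = z" unfolding ev_def alpha_def by simp
lemma ev_pow: "ev z (x ^ n) = ev z x ^ n" by (induction n) (simp_all add: ev_one ev_mult)

lemmas ev_simps = ev_mult ev_add ev_minus ev_diff ev_of_int ev_one ev_alpha ev_pow

lemma ev_PS: "map4 (ev z) (PS (alpha^2) g i) = PS (z^2) g i"
proof (induction i)
  case 0 then show ?case by (simp only: map4_def PS.simps ev_minus ev_of_int ev_one prod.case)
next
  case (Suc i)
  obtain n d n' d' where e: "PS (alpha^2) g i = (n, d, n', d')" by (cases "PS (alpha^2) g i") auto
  with Suc have "PS (z^2) g i = (ev z n, ev z d, ev z n', ev z d')" unfolding map4_def by simp
  then show ?case using e unfolding map4_def by (simp add: ev_simps)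
qed

lemma real_PS: "map4 complex_of_real (PS (- s) g i) = PS (- complex_of_real s) g i"
proof (induction i)
  case 0 then show ?case unfolding map4_def by simp
next
  case (Suc i)
  obtain n d n' d' where e: "PS (- s) g i = (n, d, n', d')" by (cases "PS (- s) g i") auto
  with Suc have "PS (- complex_of_real s) g i = (of_real n, of_real d, of_real n', of_real d')" unfolding map4_def by simp
  then show ?case using e unfolding map4_def by simp
qed

lemma sign_inv:
  fixes s :: real
  assumes "s \<ge> 0" "4 \<le> g"
  shows "2 * i + 4 \<le> g \<Longrightarrow> PS (- s) g i = (n, d, n', d') \<Longrightarrow>
    n * d < 0 \<and> (if even i then n' * d' < 0 else n' * d' > 0)"
proof (induction i arbitrary: n d n' d')
  case 0
  then have "n = - 8 * g" "d = g - 1" "n' = -1" "d' = 2 * (real g - 1) * (real g - 2)" by auto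
  moreover have "real g \<ge> 4" using assms by simp
  ultimately show ?case by (simp add: mult_pos_pos mult_neg_pos)
next
  case (Suc i)
  obtain n0 d0 n0' d0' where e: "PS (- s) g i = (n0, d0, n0', d0')" by (cases "PS (- s) g i") auto
  from Suc.IH[OF _ e] Suc.prems(1) have IH: "n0 * d0 < 0" "if even i then n0' * d0' < 0 else n0' * d0' > 0" by auto
  have M: "int g - 2 * int i \<ge> 6" using Suc.prems(1) by simp
  have cpos: "real_of_int (cc g i) > 0" unfolding cc_def using M by (simp add: mult_pos_pos)
  have epos: "real_of_int (ee g i) > 0" unfolding ee_def using M by (simp add: mult_pos_pos)
  have dpos: "real_of_int (dd g i) > 0" unfolding dd_def using M by simp
  define c where "c = real_of_int (cc g i)"
  define ea where "ea = real_of_int (ee g i)"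
  define dl where "dl = real_of_int (dd g i)"
  have nz: "d0 \<noteq> 0" "n0' \<noteq> 0" "d0' \<noteq> 0" using IH by (auto split: if_splits)
  have sq1: "(d0 * n0')^2 > 0" using nz by simp
  have sq2: "d0'^2 > 0" using nz by simp
  show ?case
  proof (cases "even i")
    case True
    then have vals: "n = -(n0*d0' + dl*d0*n0')" "d = ea*d0*n0'" "n' = (d0'*n0 + s*d0*n0')*d0'" "d' = c*d0*d0'*n0'"
      using Suc.prems(2) e unfolding c_def ea_def dl_def by auto
    have P: "(n0 * d0) * (n0' * d0') > 0" using IH True by (simp add: mult_neg_neg)
    have i1: "n * d = - ea * ((n0 * d0) * (n0' * d0') + dl * (d0 * n0')^2)"
      unfolding vals by (simp add: algebra_simps power2_eq_square)
    have i2: "n' * d' = c * d0'^2 * ((n0 * d0) * (n0' * d0') + s * (d0 * n0')^2)"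
      unfolding vals by (simp add: algebra_simps power2_eq_square)
    have a1: "(n0 * d0) * (n0' * d0') + dl * (d0 * n0')^2 > 0"
      using P dpos sq1 unfolding dl_def by (simp add: add_pos_pos)
    have a2: "(n0 * d0) * (n0' * d0') + s * (d0 * n0')^2 > 0"
      using P assms(1) sq1 by (simp add: add_pos_nonneg)
    have "n * d < 0" unfolding i1 using a1 epos unfolding ea_def by (simp add: mult_pos_pos)
    moreover have "n' * d' > 0" unfolding i2 using a2 cpos sq2 unfolding c_def by (simp add: mult_pos_pos)
    ultimately show ?thesis using True by simp
  next
    case False
    then have vals: "n = -(d0'*(- s*d0'*n0 + dl*d0*n0'))" "d = ea*d0*d0'*n0'" "n' = (d0'*n0 - d0*n0')*d0'" "d' = c*d0*d0'*n0'"
      using Suc.prems(2) e unfolding c_def ea_def dl_def by auto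
    have P: "(n0 * d0) * (n0' * d0') < 0" using IH False by (simp add: mult_neg_pos)
    have i1: "n * d = - ea * d0'^2 * (dl * (d0 * n0')^2 - s * ((n0 * d0) * (n0' * d0')))"
      unfolding vals by (simp add: algebra_simps power2_eq_square)
    have i2: "n' * d' = c * d0'^2 * ((n0 * d0) * (n0' * d0') - (d0 * n0')^2)"
      unfolding vals by (simp add: algebra_simps power2_eq_square)
    have "s * ((n0 * d0) * (n0' * d0')) \<le> 0" using P assms(1) by (simp add: mult_nonneg_nonpos)
    then have a1: "dl * (d0 * n0')^2 - s * ((n0 * d0) * (n0' * d0')) > 0"
      using dpos sq1 unfolding dl_def by (smt (verit) mult_pos_pos)
    have a2: "(n0 * d0) * (n0' * d0') - (d0 * n0')^2 < 0" using P sq1 by linarith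
    have "n * d < 0" unfolding i1 using a1 epos sq2 unfolding ea_def by (simp add: mult_pos_pos)
    moreover have "n' * d' < 0" unfolding i2 using a2 cpos sq2 unfolding c_def by (simp add: mult_pos_neg)
    ultimately show ?thesis using False by simp
  qed
qed

lemma id_even1: fixes a :: "'a::comm_ring_1"
  shows "B = a*A1 + c*A2 \<Longrightarrow> (c*D*D'*N') * a * A2 - ((D'*N - a^2*D*N')*D') * A1 = D'*(N'*a*(D*B - N*A) - N*(D'*A1 - a*N'*A))"
  by (simp add: algebra_simps power2_eq_square)
lemma id_even2: fixes a :: "'a::comm_ring_1"
  shows "(e*D*N')*B1 - (-(N*D' + dl*D*N'))*A1 = D*N'*(a*B + dl*A1 + e*B1) - N'*a*(D*B - N*A) + N*(D'*A1 - a*N'*A)"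
  by (simp add: algebra_simps)
lemma id_odd1: fixes a :: "'a::comm_ring_1"
  shows "B = a*A1 + c*A2 \<Longrightarrow> (c*D*D'*N')*A2 - a*((D'*N - D*N')*D')*A1 = D'*(N'*(D*B - N*A) - N*(D'*a*A1 - N'*A))"
  by (simp add: algebra_simps)
lemma id_odd2: fixes a :: "'a::comm_ring_1"
  shows "(e*D*D'*N')*B1 - (-(D'*(a^2*D'*N + dl*D*N')))*A1 = D*D'*N'*(a*B + dl*A1 + e*B1) - a*D'*(N'*(D*B - N*A) - N*(D'*a*A1 - N'*A))"
  by (simp add: algebra_simps power2_eq_square)

lemma q_in_J: assumes "even g" "2 \<le> g" "2 * i + 2 \<le> g"
  shows "in_J g (alpha * BB g i + of_int (dd g i) * AA g (i + 1) + of_int (ee g i) * BB g (i + 1))"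
proof -
  have "in_J g (gamma * AA g i)"
    using H[OF assms(2,1), of "2*i+1" "i+1"] unfolding AA_def by (simp add: algebra_simps)
  then show ?thesis using E1[OF assms(3,1)] unfolding dd_def ee_def by simp
qed

lemma cong_inv: assumes g: "even g" "4 \<le> g"
  shows "2 * i + 4 \<le> g \<Longrightarrow> PS (alpha^2) g i = (N, D, N', D') \<Longrightarrow>
    in_J g (D * BB g i - N * AA g i) \<and>
    (if even i then in_J g (D' * AA g (i+1) - alpha * N' * AA g i)
     else in_J g (D' * alpha * AA g (i+1) - N' * AA g i))"
proof (induction i arbitrary: N D N' D')
  case 0
  then have vals: "N = - of_int (8 * int g)" "D = of_int (int g - 1)" "N' = -1" "D' = of_int (2 * (int g - 1) * (int g - 2))"
    by auto
  have A0: "AA g 0 = zeta (int g - 1)" unfolding AA_def by simp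
  have B0: "BB g 0 = gamma * zeta (int g - 2)" unfolding BB_def by simp
  have A1: "AA g 1 = gamma * zeta (int g - 3)" unfolding AA_def by simp
  have "of_int (2 * int g) * (D * BB g 0 - N * AA g 0) =
    of_int (16 * (int g)^2) * zeta (int g - 1) + of_int (2 * int g * (int g - 1)) * gamma * zeta (int g - 2)"
    unfolding vals A0 B0 by (simp add: algebra_simps power2_eq_square)
  then have "in_J g (of_int (2 * int g) * (D * BB g 0 - N * AA g 0))" using W1[of g] g by simp
  moreover have nz: "2 * int g \<noteq> 0" using g by simp
  ultimately have h1: "in_J g (D * BB g 0 - N * AA g 0)" using in_J_div[of g _ _, OF _ nz] by simp
  have K: "int g - 1 \<ge> 0" "odd (int g - 1)" using g by auto
  have "zeta (int g - 1 + 1) = alpha * zeta (int g - 1) + of_int (2 * (int g - 1) * (int g - 1 - 1)) * gamma * zeta (int g - 1 - 2)"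
    by (rule zeta_rec_odd[OF K])
  then have "D' * AA g 1 - alpha * N' * AA g 0 = zeta (int g)"
    unfolding vals A0 A1 by (simp add: algebra_simps)
  then have h2: "in_J g (D' * AA g 1 - alpha * N' * AA g 0)" using in_J_z0 by simp
  show ?case using h1 h2 by simp
next
  case (Suc i)
  obtain N0 D0 N0' D0' where e: "PS (alpha^2) g i = (N0, D0, N0', D0')" by (cases "PS (alpha^2) g i") auto
  from Suc.IH[OF _ e] Suc.prems(1) have h1: "in_J g (D0 * BB g i - N0 * AA g i)"
    and h2: "if even i then in_J g (D0' * AA g (i+1) - alpha * N0' * AA g i)
     else in_J g (D0' * alpha * AA g (i+1) - N0' * AA g i)" by auto
  have E2': "BB g i = alpha * AA g (i + 1) + of_int (cc g i) * AA g (i + 2)"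
    using E2[of i g] Suc.prems(1) g unfolding cc_def by simp
  have q: "in_J g (alpha * BB g i + of_int (dd g i) * AA g (i + 1) + of_int (ee g i) * BB g (i + 1))"
    by (rule q_in_J) (use Suc.prems(1) g in auto)
  have s1: "Suc i = i + 1" by simp_all
  have ii: "i + 1 + 1 = i + 2" by simp
  show ?case
  proof (cases "even i")
    case True
    then have vals: "N = -(N0*D0' + of_int (dd g i)*D0*N0')" "D = of_int (ee g i)*D0*N0'"
        "N' = (D0'*N0 - alpha^2*D0*N0')*D0'" "D' = of_int (cc g i)*D0*D0'*N0'"
      using Suc.prems(2) e by auto
    have h2': "in_J g (D0' * AA g (i+1) - alpha * N0' * AA g i)" using h2 True by simp
    have X1: "(of_int (cc g i)*D0*D0'*N0') * alpha * AA g (i+1+1) - ((D0'*N0 - alpha^2*D0*N0')*D0') * AA g (i+1)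
       = D0'*(N0'*alpha*(D0*BB g i - N0*AA g i) - N0*(D0'*AA g (i+1) - alpha*N0'*AA g i))"
      unfolding ii by (rule id_even1[OF E2'])
    have r1: "in_J g (D' * alpha * AA g (Suc i + 1) - N' * AA g (Suc i))"
      unfolding vals s1 X1 by (rule in_J_mult[OF in_J_diff[OF in_J_mult[OF h1] in_J_mult[OF h2']]])
    have X2: "(of_int (ee g i)*D0*N0')*BB g (i+1) - (-(N0*D0' + of_int (dd g i)*D0*N0'))*AA g (i+1) = D0*N0'*(alpha*BB g i + of_int (dd g i)*AA g (i+1) + of_int (ee g i)*BB g (i+1)) - N0'*alpha*(D0*BB g i - N0*AA g i) + N0*(D0'*AA g (i+1) - alpha*N0'*AA g i)"
      by (rule id_even2)
    have r2: "in_J g (D * BB g (Suc i) - N * AA g (Suc i))"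
      unfolding vals s1 X2 by (rule in_J_add[OF in_J_diff[OF in_J_mult[OF q] in_J_mult[OF h1]] in_J_mult[OF h2']])
    show ?thesis using r1 r2 True by simp
  next
    case False
    then have vals: "N = -(D0'*(alpha^2*D0'*N0 + of_int (dd g i)*D0*N0'))" "D = of_int (ee g i)*D0*D0'*N0'"
        "N' = (D0'*N0 - D0*N0')*D0'" "D' = of_int (cc g i)*D0*D0'*N0'"
      using Suc.prems(2) e by auto
    have h2': "in_J g (D0' * alpha * AA g (i+1) - N0' * AA g i)" using h2 False by simp
    have X1: "(of_int (cc g i)*D0*D0'*N0')*AA g (i+1+1) - alpha*((D0'*N0 - D0*N0')*D0')*AA g (i+1) = D0'*(N0'*(D0*BB g i - N0*AA g i) - N0*(D0'*alpha*AA g (i+1) - N0'*AA g i))"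
      unfolding ii by (rule id_odd1[OF E2'])
    have r1: "in_J g (D' * AA g (Suc i + 1) - alpha * N' * AA g (Suc i))"
      unfolding vals s1 X1 by (rule in_J_mult[OF in_J_diff[OF in_J_mult[OF h1] in_J_mult[OF h2']]])
    have X2: "(of_int (ee g i)*D0*D0'*N0')*BB g (i+1) - (-(D0'*(alpha^2*D0'*N0 + of_int (dd g i)*D0*N0')))*AA g (i+1) = D0*D0'*N0'*(alpha*BB g i + of_int (dd g i)*AA g (i+1) + of_int (ee g i)*BB g (i+1)) - alpha*D0'*(N0'*(D0*BB g i - N0*AA g i) - N0*(D0'*alpha*AA g (i+1) - N0'*AA g i))"
      by (rule id_odd2)
    have r2: "in_J g (D * BB g (Suc i) - N * AA g (Suc i))"
      unfolding vals s1 X2 by (rule in_J_diff[OF in_J_mult[OF q] in_J_mult[OF in_J_diff[OF in_J_mult[OF h1] in_J_mult[OF h2']]]])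
    show ?thesis using r1 r2 False by simp
  qed
qed

lemma unit_mult: assumes "unit_mod_J g a" "unit_mod_J g b" shows "unit_mod_J g (a * b)"
proof -
  obtain va vb where va: "in_J g (a * va - 1)" and vb: "in_J g (b * vb - 1)"
    using assms unfolding unit_mod_J_def cong_J_def by blast
  have eq: "a * b * (va * vb) - 1 = (b * vb) * (a * va - 1) + (b * vb - 1)" by (simp add: algebra_simps)
  have "in_J g (a * b * (va * vb) - 1)" unfolding eq by (rule in_J_add[OF in_J_mult[OF va] vb])
  then show ?thesis unfolding unit_mod_J_def cong_J_def by blast
qed

lemma unit_of_inv: "cong_J g (D * v) 1 \<Longrightarrow> unit_mod_J g v"
  unfolding unit_mod_J_def cong_J_def by (rule exI[of _ D]) (simp add: mult.commute)

lemma cancel_unit: assumes "unit_mod_J g u" "in_J g (u * x)" shows "in_J g x"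
proof -
  obtain v where v: "in_J g (u * v - 1)" using assms(1) unfolding unit_mod_J_def cong_J_def by blast
  have "x = v * (u * x) - x * (u * v - 1)" by (simp add: algebra_simps)
  then show ?thesis using in_J_diff[OF in_J_mult[OF assms(2)] in_J_mult[OF v]] by metis
qed

lemma unit_one: "unit_mod_J g 1" unfolding unit_mod_J_def cong_J_def
  by (rule exI[of _ 1]) (simp add: in_J_0)

lemma unit_m16: "unit_mod_J g (-16)"
proof -
  have "(-16 :: cpoly2) * cst (- 1 / 16) = 1"
    unfolding cst_def by (simp add: numeral_poly one_pCons)
  then show ?thesis unfolding unit_mod_J_def cong_J_def using in_J_0 by (metis diff_self)
qed

lemma PS_vals:
  assumes "s \<ge> 0" "z^2 = - complex_of_real s"
    "PS (alpha^2) g i = (N, D, N', D')" "PS (- s) g i = (n, d, n', d')"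
  shows "ev z N = of_real n" "ev z D = of_real d" "ev z N' = of_real n'" "ev z D' = of_real d'"
proof -
  have "map4 (ev z) (PS (alpha^2) g i) = map4 complex_of_real (PS (- s) g i)"
    unfolding ev_PS real_PS assms(2) ..
  then show "ev z N = of_real n" "ev z D = of_real d" "ev z N' = of_real n'" "ev z D' = of_real d'"
    using assms(3,4) unfolding map4_def by auto
qed

lemma good_units:
  assumes g: "even g" "4 \<le> g" and i: "2 * i + 4 \<le> g" and e: "PS (alpha^2) g i = (N, D, N', D')"
  shows "unit_mod_J g N" "unit_mod_J g D" "unit_mod_J g N'" "unit_mod_J g D'"
    "even i \<Longrightarrow> unit_mod_J g (N * D' - alpha^2 * D * N')"
    "odd i \<Longrightarrow> unit_mod_J g (D * N' - D' * N)"
proof -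
  have g2: "g \<ge> 2" using g by simp
  have key: "\<And>z s. s \<ge> 0 \<Longrightarrow> z^2 = - complex_of_real s \<Longrightarrow>
     ev z N \<noteq> 0 \<and> ev z D \<noteq> 0 \<and> ev z N' \<noteq> 0 \<and> ev z D' \<noteq> 0 \<and>
     (even i \<longrightarrow> ev z (N * D' - alpha^2 * D * N') \<noteq> 0) \<and> (odd i \<longrightarrow> ev z (D * N' - D' * N) \<noteq> 0)"
  proof -
    fix z s assume s: "(s::real) \<ge> 0" and z: "z^2 = - complex_of_real s"
    obtain n d n' d' where e2: "PS (- s) g i = (n, d, n', d')" by (cases "PS (- s) g i") auto
    note V = PS_vals[OF s z e e2]
    have S: "n * d < 0" "if even i then n' * d' < 0 else n' * d' > 0"
      using sign_inv[OF s g(2) i e2] by auto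
    have nz: "n \<noteq> 0" "d \<noteq> 0" "n' \<noteq> 0" "d' \<noteq> 0" using S by (auto split: if_splits)
    have E: "even i \<Longrightarrow> n * d' + s * d * n' \<noteq> 0"
    proof
      assume ev: "even i" and h: "n * d' + s * d * n' = 0"
      have "(n * d) * (n' * d') + s * (d * n')^2 = (d * n') * (n * d' + s * d * n')"
        by (simp add: algebra_simps power2_eq_square)
      also have "\<dots> = 0" using h by simp
      finally have "(n * d) * (n' * d') + s * (d * n')^2 = 0" .
      moreover have "(n * d) * (n' * d') > 0" using S ev by (simp add: mult_neg_neg)
      moreover have "s * (d * n')^2 \<ge> 0" using s by simp
      ultimately show False by linarith
    qed
    have O: "odd i \<Longrightarrow> d * n' - d' * n \<noteq> 0"
    proof
      assume od: "odd i" and h: "d * n' - d' * n = 0"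
      have "(d * n')^2 - (n * d) * (n' * d') = (d * n') * (d * n' - d' * n)"
        by (simp add: algebra_simps power2_eq_square)
      also have "\<dots> = 0" using h by simp
      finally have "(d * n')^2 - (n * d) * (n' * d') = 0" .
      moreover have "(n * d) * (n' * d') < 0" using S od by (simp add: mult_neg_pos)
      moreover have "(d * n')^2 \<ge> 0" by simp
      ultimately show False by linarith
    qed
    have e1: "ev z (N * D' - alpha^2 * D * N') = of_real (n * d' + s * d * n')"
      by (simp add: ev_simps V z)
    have e2': "ev z (D * N' - D' * N) = of_real (d * n' - d' * n)"
      by (simp add: ev_simps V)
    show "ev z N \<noteq> 0 \<and> ev z D \<noteq> 0 \<and> ev z N' \<noteq> 0 \<and> ev z D' \<noteq> 0 \<and>
     (even i \<longrightarrow> ev z (N * D' - alpha^2 * D * N') \<noteq> 0) \<and> (odd i \<longrightarrow> ev z (D * N' - D' * N) \<noteq> 0)"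
      using nz E O unfolding V e1 e2' of_real_eq_0_iff by blast
  qed
  show "unit_mod_J g N" by (rule unit_lemma[OF g2 g(1)]) (use key in \<open>auto simp: ev_def\<close>)
  show "unit_mod_J g D" by (rule unit_lemma[OF g2 g(1)]) (use key in \<open>auto simp: ev_def\<close>)
  show "unit_mod_J g N'" by (rule unit_lemma[OF g2 g(1)]) (use key in \<open>auto simp: ev_def\<close>)
  show "unit_mod_J g D'" by (rule unit_lemma[OF g2 g(1)]) (use key in \<open>auto simp: ev_def\<close>)
  show "even i \<Longrightarrow> unit_mod_J g (N * D' - alpha^2 * D * N')"
    by (rule unit_lemma[OF g2 g(1)]) (use key in \<open>auto simp: ev_def\<close>)
  show "odd i \<Longrightarrow> unit_mod_J g (D * N' - D' * N)"
    by (rule unit_lemma[OF g2 g(1)]) (use key in \<open>auto simp: ev_def\<close>)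
qed

lemma main_mid:
  assumes g: "even g" "4 \<le> g" and i: "2 * i + 4 \<le> g"
  shows "(\<exists>w. unit_mod_J g w \<and> in_J g (w * AA g i - BB g i)) \<and>
    (\<exists>x. unit_mod_J g x \<and> (if even i then in_J g (alpha * x * AA g i - AA g (i+1))
        else in_J g (x * AA g i - alpha * AA g (i+1))))"
proof -
  obtain N D N' D' where e: "PS (alpha^2) g i = (N, D, N', D')" by (cases "PS (alpha^2) g i") auto
  note CI = cong_inv[OF g i e]
  note U = good_units[OF g i e]
  obtain v where v: "in_J g (D * v - 1)" using U(2) unfolding unit_mod_J_def cong_J_def by blast
  obtain v' where v': "in_J g (D' * v' - 1)" using U(4) unfolding unit_mod_J_def cong_J_def by blast
  have uv: "unit_mod_J g v" by (rule unit_of_inv) (use v in \<open>simp add: cong_J_def\<close>)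
  have uv': "unit_mod_J g v'" by (rule unit_of_inv) (use v' in \<open>simp add: cong_J_def\<close>)
  have h1: "in_J g (D * BB g i - N * AA g i)" using CI by simp
  have eq1: "N * v * AA g i - BB g i = (- v) * (D * BB g i - N * AA g i) + BB g i * (D * v - 1)"
    by (simp add: algebra_simps)
  have W: "in_J g (N * v * AA g i - BB g i)" unfolding eq1
    by (rule in_J_add[OF in_J_mult[OF h1] in_J_mult[OF v]])
  have X: "if even i then in_J g (alpha * (N' * v') * AA g i - AA g (i+1))
        else in_J g ((N' * v') * AA g i - alpha * AA g (i+1))"
  proof (cases "even i")
    case True
    then have h2: "in_J g (D' * AA g (i+1) - alpha * N' * AA g i)" using CI by simp
    have eq: "alpha * (N' * v') * AA g i - AA g (i+1) = (- v') * (D' * AA g (i+1) - alpha * N' * AA g i) + AA g (i+1) * (D' * v' - 1)"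
      by (simp add: algebra_simps)
    have r: "in_J g (alpha * (N' * v') * AA g i - AA g (i+1))" unfolding eq
      by (rule in_J_add[OF in_J_mult[OF h2] in_J_mult[OF v']])
    show ?thesis using True r by simp
  next
    case False
    then have h2: "in_J g (D' * alpha * AA g (i+1) - N' * AA g i)" using CI by simp
    have eq: "(N' * v') * AA g i - alpha * AA g (i+1) = (- v') * (D' * alpha * AA g (i+1) - N' * AA g i) + (alpha * AA g (i+1)) * (D' * v' - 1)"
      by (simp add: algebra_simps)
    have r: "in_J g ((N' * v') * AA g i - alpha * AA g (i+1))" unfolding eq
      by (rule in_J_add[OF in_J_mult[OF h2] in_J_mult[OF v']])
    show ?thesis using False r by simp
  qed
  show ?thesis
    using W X unit_mult[OF U(1) uv] unit_mult[OF U(3) uv'] by blast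
qed

lemma AA_zero: "2 * i \<ge> g \<Longrightarrow> AA g i = 0" unfolding AA_def by (simp add: zeta_neg)
lemma BB_zero: "2 * i \<ge> g \<Longrightarrow> BB g i = 0" unfolding BB_def by (simp add: zeta_neg)

lemma main_last:
  assumes g: "even g" "4 \<le> g" and i: "2 * i + 2 = g"
  shows "(\<exists>w. unit_mod_J g w \<and> in_J g (w * AA g i - BB g i)) \<and>
    (\<exists>x. unit_mod_J g x \<and> (if even i then in_J g (alpha * x * AA g i - AA g (i+1))
        else in_J g (x * AA g i - alpha * AA g (i+1))))"
proof -
  define i0 where "i0 = i - 1"
  have i0: "i = i0 + 1" "2 * i0 + 4 = g" using i g unfolding i0_def by auto
  have Z2: "AA g (i0 + 2) = 0" by (rule AA_zero) (use i0 in simp)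
  have Z1: "AA g (i + 1) = 0" by (rule AA_zero) (use i in simp)
  have B0: "BB g i0 = alpha * AA g i"
    using E2[of i0 g] i0 g Z2 by simp
  have q0: "in_J g (alpha * BB g i0 + of_int (dd g i0) * AA g (i0 + 1) + of_int (ee g i0) * BB g (i0 + 1))"
    by (rule q_in_J) (use i0 g in auto)
  have dd: "dd g i0 = 64" "ee g i0 = 4" unfolding dd_def ee_def using i0 by auto
  have q: "in_J g (alpha * BB g i0 + 64 * AA g i + 4 * BB g i)" using q0 unfolding dd i0(1)[symmetric] by simp
  obtain N D N' D' where e: "PS (alpha^2) g i0 = (N, D, N', D')" by (cases "PS (alpha^2) g i0") auto
  have ii: "2 * i0 + 4 \<le> g" using i0 by simp
  note CI = cong_inv[OF g ii e]
  note U = good_units[OF g ii e]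
  have h1: "in_J g (D * BB g i0 - N * AA g i0)" using CI by simp
  show ?thesis
  proof (cases "even i0")
    case True
    then have h2: "in_J g (D' * AA g i - alpha * N' * AA g i0)" using CI i0 by simp
    have eq: "(N * D' - alpha^2 * D * N') * AA g i = N * (D' * AA g i - alpha * N' * AA g i0) - (alpha * N') * (D * BB g i0 - N * AA g i0)"
      unfolding B0 by (simp add: algebra_simps power2_eq_square)
    have "in_J g ((N * D' - alpha^2 * D * N') * AA g i)" unfolding eq
      by (rule in_J_diff[OF in_J_mult[OF h2] in_J_mult[OF h1]])
    then have A: "in_J g (AA g i)" by (rule cancel_unit[OF U(5)[OF True]])
    have eq2: "of_int 4 * BB g i = (alpha * BB g i0 + 64 * AA g i + 4 * BB g i) - (alpha * alpha + 64) * AA g i"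
      unfolding B0 by (simp add: algebra_simps)
    have "in_J g (of_int 4 * BB g i)" unfolding eq2 by (rule in_J_diff[OF q in_J_mult[OF A]])
    then have B: "in_J g (BB g i)" by (rule in_J_div) simp
    have oi: "odd i" using True i0 by simp
    have w: "in_J g (1 * AA g i - BB g i)" using in_J_diff[OF A B] by simp
    have x: "in_J g (1 * AA g i - alpha * AA g (i+1))" using A Z1 by simp
    have W: "\<exists>w. unit_mod_J g w \<and> in_J g (w * AA g i - BB g i)" by (intro exI[of _ 1] conjI unit_one w)
    have X: "\<exists>x. unit_mod_J g x \<and> in_J g (x * AA g i - alpha * AA g (i+1))" by (intro exI[of _ 1] conjI unit_one x)
    show ?thesis using W X oi by simp
  next
    case False
    then have h2: "in_J g (D' * alpha * AA g i - N' * AA g i0)" using CI i0 by simp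
    have eq: "(D * N' - D' * N) * (alpha * AA g i) = N' * (D * BB g i0 - N * AA g i0) - N * (D' * alpha * AA g i - N' * AA g i0)"
      unfolding B0 by (simp add: algebra_simps)
    have "in_J g ((D * N' - D' * N) * (alpha * AA g i))" unfolding eq
      by (rule in_J_diff[OF in_J_mult[OF h1] in_J_mult[OF h2]])
    then have A: "in_J g (alpha * AA g i)" by (rule cancel_unit[OF U(6)[OF False]])
    have eq2: "of_int 4 * (BB g i + 16 * AA g i) = (alpha * BB g i0 + 64 * AA g i + 4 * BB g i) - alpha * (alpha * AA g i)"
      unfolding B0 by (simp add: algebra_simps)
    have "in_J g (of_int 4 * (BB g i + 16 * AA g i))" unfolding eq2 by (rule in_J_diff[OF q in_J_mult[OF A]])
    then have B: "in_J g (BB g i + 16 * AA g i)" by (rule in_J_div) simp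
    have ei: "even i" using False i0 by simp
    have eqw: "(-16) * AA g i - BB g i = - (BB g i + 16 * AA g i)" by (simp add: algebra_simps)
    have w: "in_J g ((-16) * AA g i - BB g i)" unfolding eqw by (rule in_J_uminus[OF B])
    have x: "in_J g (alpha * 1 * AA g i - AA g (i+1))" using A Z1 by simp
    have W: "\<exists>w. unit_mod_J g w \<and> in_J g (w * AA g i - BB g i)" by (intro exI[of _ "-16"] conjI unit_m16 w)
    have X: "\<exists>x. unit_mod_J g x \<and> in_J g (alpha * x * AA g i - AA g (i+1))" by (intro exI[of _ 1] conjI unit_one x)
    show ?thesis using W X ei by simp
  qed
qed

lemma in_J_g0: "in_J 0 x" unfolding in_J_def
  by (rule exI[of _ x], rule exI[of _ 0], rule exI[of _ 0]) (simp add: zeta_def)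

lemma zeta1: "zeta 1 = alpha" by (simp add: zeta_def)
lemma zeta2: "zeta 2 = alpha * alpha" by (simp add: zeta_def numeral_2_eq_2)

lemma main_all:
  assumes g: "even g"
  shows "(\<exists>w. unit_mod_J g w \<and> in_J g (w * AA g i - BB g i)) \<and>
    (\<exists>x. unit_mod_J g x \<and> (if even i then in_J g (alpha * x * AA g i - AA g (i+1))
        else in_J g (x * AA g i - alpha * AA g (i+1))))"
proof -
  consider "g = 0" | "g \<noteq> 0 \<and> 2 * i \<ge> g" | "g = 2 \<and> i = 0" | "4 \<le> g \<and> 2 * i + 4 \<le> g" | "4 \<le> g \<and> 2 * i + 2 = g"
  proof -
    obtain k where k: "g = 2 * k" using g by (elim evenE)
    have "g = 0 \<or> (g \<noteq> 0 \<and> 2 * i \<ge> g) \<or> (g = 2 \<and> i = 0) \<or> (4 \<le> g \<and> 2 * i + 4 \<le> g) \<or> (4 \<le> g \<and> 2 * i + 2 = g)"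
      unfolding k by arith
    then show ?thesis using that by blast
  qed
  then show ?thesis
  proof cases
    case 1
    then show ?thesis using unit_one in_J_g0 by auto
  next
    case 2
    then have z: "AA g i = 0" "BB g i = 0" "AA g (i+1) = 0" by (simp_all add: AA_zero BB_zero)
    show ?thesis unfolding z using unit_one in_J_0 by auto
  next
    case 3
    then have gg: "g = 2" "i = 0" by auto
    have A: "AA 2 0 = alpha" unfolding AA_def by (simp add: zeta1)
    have B: "BB 2 0 = gamma" unfolding BB_def by (simp add: zeta_def)
    have A1: "AA 2 (0+1) = 0" by (rule AA_zero) simp
    have "in_J 2 (of_int (16 * (int 2)^2) * zeta (int 2 - 1) + of_int (2 * int 2 * (int 2 - 1)) * gamma * zeta (int 2 - 2))"
      by (rule W1) simp_all
    then have "in_J 2 (of_int 4 * (16 * alpha + gamma))" by (simp add: zeta1 zeta_def algebra_simps)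
    then have "in_J 2 (16 * alpha + gamma)" by (rule in_J_div) simp
    moreover have "(-16) * alpha - gamma = - (16 * alpha + gamma)" by (simp add: algebra_simps)
    ultimately have w: "in_J 2 ((-16) * alpha - gamma)" using in_J_uminus by metis
    have x: "in_J 2 (alpha * 1 * alpha - 0)" using in_J_z0[of 2] by (simp add: zeta2)
    have W: "\<exists>w. unit_mod_J 2 w \<and> in_J 2 (w * AA 2 0 - BB 2 0)" unfolding A B by (intro exI[of _ "-16"] conjI unit_m16 w)
    have X: "\<exists>x. unit_mod_J 2 x \<and> in_J 2 (alpha * x * AA 2 0 - AA 2 (0+1))" unfolding A A1 by (intro exI[of _ 1] conjI unit_one x)
    show ?thesis using W X unfolding gg by simp
  next
    case 4
    then show ?thesis using main_mid[OF g] by blast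
  next
    case 5
    then show ?thesis using main_last[OF g] by blast
  qed
qed

theorem lemma5p9:
  fixes g i :: nat
  assumes "even g"
  shows "(\<exists>w. unit_mod_J g w \<and>
            cong_J g (w * gamma ^ i * zeta (int g - 2 * int i - 1))
                     (gamma ^ (i + 1) * zeta (int g - 2 * int i - 2)))
       \<and> (\<exists>x. unit_mod_J g x \<and>
            (if even i
             then cong_J g (alpha * x * gamma ^ i * zeta (int g - 2 * int i - 1))
                           (gamma ^ (i + 1) * zeta (int g - 2 * int i - 3))
             else cong_J g (x * gamma ^ i * zeta (int g - 2 * int i - 1))
                           (alpha * gamma ^ (i + 1) * zeta (int g - 2 * int i - 3))))"
proof -
  have e1: "\<And>w. w * gamma ^ i * zeta (int g - 2 * int i - 1) = w * AA g i" unfolding AA_def by (simp add: mult.assoc)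
  have e2: "gamma ^ (i + 1) * zeta (int g - 2 * int i - 2) = BB g i" unfolding BB_def ..
  have e3: "gamma ^ (i + 1) * zeta (int g - 2 * int i - 3) = AA g (i + 1)" unfolding AA_def
    by (rule arg_cong[where f="\<lambda>x. gamma ^ (i + 1) * zeta x"]) simp
  have e4: "alpha * gamma ^ (i + 1) * zeta (int g - 2 * int i - 3) = alpha * AA g (i + 1)"
    unfolding e3[symmetric] by (simp add: mult.assoc)
  show ?thesis unfolding cong_J_def e1 e2 e3 e4 using main_all[OF assms] by simp
qed

end
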